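(* Let $X$, $Y$, $Z$ be random variables with values in $\mathcal{X}$, $\mathcal{Y}$, $\mathcal{Z}$ and joint distribution $P_{X,Y,Z}$. Then $$\mathrm{Weak\text{-}MI}(X;Y|Z)\le \mathrm{MI}(X;Y|Z).$$
   Context: $D_{\mathrm{KL}}$ denotes the Kullback–Leibler divergence. $\mathbb{E}_{P_Z}[P_{X|Z}P_{Y|Z}]$ denotes the mixture measure on $\mathcal{X}\times\mathcal{Y}$ given by $\int P_{X|Z=z}\otimes P_{Y|Z=z}\,dP_Z(z)$, where $P_{X|Z=z}$, $P_{Y|Z=z}$ are conditional distributions and $P_Z$ is the marginal of $Z$. The weak-conditional mutual information is $\mathrm{Weak\text{-}MI}(X;Y|Z):=D_{\mathrm{KL}}\big(P_{X,Y}\,\|\,\mathbb{E}_{P_Z}[P_{X|Z}P_{Y|Z}]\big)$, and the conditional mutual information is $\mathrm{MI}(X;Y|Z):=\mathbb{E}_{z\sim P_Z}\big[D_{\mathrm{KL}}(P_{X,Y|Z=z}\,\|\,P_{X|Z=z}P_{Y|Z=z})\big]$. *)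

theory Defs
  imports "HOL-Probability.Probability"
begin

definition KL_div :: "'a measure \<Rightarrow> 'a measure \<Rightarrow> ereal" where
  "KL_div P Q =
     (if sets P = sets Q \<and> absolutely_continuous Q P then
        enn2ereal (\<integral>\<^sup>+ x. ennreal (ln (enn2real (RN_deriv Q P x))) \<partial>P)
        - enn2ereal (\<integral>\<^sup>+ x. ennreal (- ln (enn2real (RN_deriv Q P x))) \<partial>P)
      else \<infinity>)"

definition law_Z :: "('x \<times> 'y \<times> 'z) measure \<Rightarrow> 'z measure \<Rightarrow> 'z measure" where
  "law_Z P MZ = distr P MZ (\<lambda>(x, y, z). z)"

definition law_XY :: "('x \<times> 'y \<times> 'z) measure \<Rightarrow> 'x measure \<Rightarrow> 'y measure \<Rightarrow> ('x \<times> 'y) measure" where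
  "law_XY P MX MY = distr P (MX \<Otimes>\<^sub>M MY) (\<lambda>(x, y, z). (x, y))"

text \<open>K is a regular conditional distribution of (X,Y) given Z under the joint law P.\<close>
definition is_cond_dist ::
  "('x \<times> 'y \<times> 'z) measure \<Rightarrow> 'x measure \<Rightarrow> 'y measure \<Rightarrow> 'z measure
     \<Rightarrow> ('z \<Rightarrow> ('x \<times> 'y) measure) \<Rightarrow> bool" where
  "is_cond_dist P MX MY MZ K \<longleftrightarrow>
     K \<in> MZ \<rightarrow>\<^sub>M subprob_algebra (MX \<Otimes>\<^sub>M MY) \<and>
     (\<forall>z \<in> space MZ. prob_space (K z)) \<and>
     (\<forall>A \<in> sets (MX \<Otimes>\<^sub>M MY). \<forall>C \<in> sets MZ.
        emeasure P {(x, y, z) \<in> space P. (x, y) \<in> A \<and> z \<in> C}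
          = (\<integral>\<^sup>+ z. indicator C z * emeasure (K z) A \<partial>law_Z P MZ))"

definition condX :: "'x measure \<Rightarrow> ('z \<Rightarrow> ('x \<times> 'y) measure) \<Rightarrow> 'z \<Rightarrow> 'x measure" where
  "condX MX K z = distr (K z) MX fst"

definition condY :: "'y measure \<Rightarrow> ('z \<Rightarrow> ('x \<times> 'y) measure) \<Rightarrow> 'z \<Rightarrow> 'y measure" where
  "condY MY K z = distr (K z) MY snd"

definition weak_MI ::
  "('x \<times> 'y \<times> 'z) measure \<Rightarrow> 'x measure \<Rightarrow> 'y measure \<Rightarrow> 'z measure
     \<Rightarrow> ('z \<Rightarrow> ('x \<times> 'y) measure) \<Rightarrow> ereal" where
  "weak_MI P MX MY MZ K =
     KL_div (law_XY P MX MY)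
            (law_Z P MZ \<bind> (\<lambda>z. condX MX K z \<Otimes>\<^sub>M condY MY K z))"

definition cond_MI ::
  "('x \<times> 'y \<times> 'z) measure \<Rightarrow> 'x measure \<Rightarrow> 'y measure \<Rightarrow> 'z measure
     \<Rightarrow> ('z \<Rightarrow> ('x \<times> 'y) measure) \<Rightarrow> ereal" where
  "cond_MI P MX MY MZ K =
     enn2ereal (\<integral>\<^sup>+ z. e2ennreal (KL_div (K z) (condX MX K z \<Otimes>\<^sub>M condY MY K z)) \<partial>law_Z P MZ)"

end

theory Submission
  imports Defs
begin

lemma pointwise_gibbs:
  fixes h r B :: real
  assumes "0 < r"
  shows "(h + B + 1) + max 0 (- ln r) \<le> max 0 (ln r) + exp h / r + B"
proof -
  have "ln (exp h / r) \<le> exp h / r - 1" by (rule ln_le_minus_one) (use assms in simp)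
  moreover have "ln (exp h / r) = h - ln r" using assms by (simp add: ln_div)
  ultimately show ?thesis by linarith
qed

lemma ennreal_sum_le:
  fixes a b c d e :: real
  assumes "a \<ge> 0" "c \<ge> 0" "d \<ge> 0" "a + max 0 b \<le> max 0 e + c + d"
  shows "ennreal a + ennreal b \<le> ennreal e + ennreal c + ennreal d"
proof -
  have 1: "ennreal a + ennreal b = ennreal (a + max 0 b)"
    using assms by (cases "b \<ge> 0") (auto simp: ennreal_neg ennreal_plus)
  have 2: "ennreal e + ennreal c + ennreal d = ennreal (max 0 e + c + d)"
    using assms by (cases "e \<ge> 0") (auto simp: ennreal_neg ennreal_plus)
  show ?thesis unfolding 1 2 using assms(4) by (rule ennreal_leI)
qed

lemma gibbs:
  fixes g :: "'a \<Rightarrow> real"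
  assumes M: "prob_space M" and N: "prob_space N" and sets: "sets M = sets N"
    and g[measurable]: "g \<in> borel_measurable N" and gB: "\<And>x. x \<in> space N \<Longrightarrow> \<bar>g x\<bar> \<le> B"
  shows "ereal ((\<integral>x. g x \<partial>M) - ln (\<integral>x. exp (g x) \<partial>N)) \<le> KL_div M N"
proof (cases "absolutely_continuous N M")
  case False
  then show ?thesis by (simp add: KL_div_def)
next
  case ac: True
  interpret M: prob_space M by fact
  interpret N: prob_space N by fact
  define f where "f = RN_deriv N M"
  define r where "r x = enn2real (f x)" for x
  have f_meas[measurable]: "f \<in> borel_measurable N" unfolding f_def by simp
  have r_meas[measurable]: "r \<in> borel_measurable N" unfolding r_def by simp
  have Mdens: "density N f = M" unfolding f_def
    using N.density_RN_deriv[OF ac] sets by simp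
  have gM[measurable]: "g \<in> borel_measurable M" using g sets by (simp cong: measurable_cong_sets)
  have rM[measurable]: "r \<in> borel_measurable M" using r_meas sets by (simp cong: measurable_cong_sets)
  have spM: "space M = space N" using sets by (rule sets_eq_imp_space_eq)
  have probMN: "measure M (space N) = 1" using M.prob_space spM by simp
  define pos where "pos = (\<integral>\<^sup>+ x. ennreal (ln (r x)) \<partial>M)"
  define neg where "neg = (\<integral>\<^sup>+ x. ennreal (- ln (r x)) \<partial>M)"
  have KL: "KL_div M N = enn2ereal pos - enn2ereal neg"
    using ac sets by (simp add: KL_div_def pos_def neg_def r_def f_def)
  show ?thesis
  proof (cases "pos = \<infinity>")
    case True
    then show ?thesis by (simp add: KL)
  next
    case posfin: False
    define Zn where "Zn = (\<integral>x. exp (g x) \<partial>N)"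
    have int_eg: "integrable N (\<lambda>x. exp (g x))"
      by (rule N.integrable_const_bound[where B="exp B"]) (auto intro!: AE_I2 dest!: gB simp: abs_le_iff)
    have "Zn \<ge> (\<integral>x. exp (- B) \<partial>N)" unfolding Zn_def
      by (rule integral_mono[OF _ int_eg]) (auto dest!: gB simp: abs_le_iff)
    then have "exp (- B) \<le> Zn" by (simp add: N.prob_space)
    then have Zpos: "Zn > 0" by (smt (verit) exp_gt_zero)
    define h where "h x = g x - ln Zn" for x
    define B' where "B' = B + \<bar>ln Zn\<bar>"
    have h_meas[measurable]: "h \<in> borel_measurable N" "h \<in> borel_measurable M" unfolding h_def by simp_all
    have hB: "\<And>x. x \<in> space N \<Longrightarrow> \<bar>h x\<bar> \<le> B'" unfolding h_def B'_def using gB by (smt (verit))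
    have int_hM: "integrable M h"
      by (rule M.integrable_const_bound[where B=B']) (auto intro!: AE_I2 simp: hB spM)
    have int_h: "(\<integral>x. h x \<partial>M) = (\<integral>x. g x \<partial>M) - ln Zn"
      unfolding h_def
      by (subst Bochner_Integration.integral_diff) (auto intro!: M.integrable_const_bound[where B=B] AE_I2 simp: gB spM probMN)
    have Aer: "AE x in M. 0 < r x"
    proof -
      have "AE x in N. f x \<noteq> \<infinity>"
        unfolding f_def by (rule N.RN_deriv_finite[OF M.sigma_finite_measure ac sets])
      then have "AE x in N. f x \<noteq> 0 \<longrightarrow> 0 < r x"
        by eventually_elim (auto simp: r_def enn2real_positive_iff less_top zero_less_iff_neq_zero)
      then have "AE x in density N f. 0 < r x"
        by (subst AE_density) auto
      then show ?thesis unfolding Mdens .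
    qed
    have "(\<integral>\<^sup>+ x. ennreal (h x + B' + 1) \<partial>M) + neg = (\<integral>\<^sup>+ x. ennreal (h x + B' + 1) + ennreal (- ln (r x)) \<partial>M)"
      unfolding neg_def by (subst nn_integral_add) auto
    also have "\<dots> \<le> (\<integral>\<^sup>+ x. ennreal (ln (r x)) + ennreal (exp (h x) / r x) + ennreal B' \<partial>M)"
    proof (rule nn_integral_mono_AE)
      show "AE x in M. ennreal (h x + B' + 1) + ennreal (- ln (r x)) \<le> ennreal (ln (r x)) + ennreal (exp (h x) / r x) + ennreal B'"
        using Aer AE_space
      proof eventually_elim
        case (elim x)
        have hx: "\<bar>h x\<bar> \<le> B'" using elim hB spM by auto
        have le: "(h x + B' + 1) + max 0 (- ln (r x)) \<le> max 0 (ln (r x)) + exp (h x) / r x + B'"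
          using pointwise_gibbs[OF elim(1)] by simp
        have B'0: "B' \<ge> 0" using hx by linarith
        show ?case using le hx B'0 elim(1) by (intro ennreal_sum_le) auto
      qed
    qed
    also have "\<dots> = pos + (\<integral>\<^sup>+ x. ennreal (exp (h x) / r x) \<partial>M) + ennreal B'"
      unfolding pos_def using M.emeasure_space_1
      by (subst nn_integral_add, simp_all, subst nn_integral_add, simp_all)
    finally have chain: "(\<integral>\<^sup>+ x. ennreal (h x + B' + 1) \<partial>M) + neg \<le> pos + (\<integral>\<^sup>+ x. ennreal (exp (h x) / r x) \<partial>M) + ennreal B'" .
    have I1: "(\<integral>\<^sup>+ x. ennreal (exp (h x) / r x) \<partial>M) \<le> 1"
    proof -
      have "(\<integral>\<^sup>+ x. ennreal (exp (h x) / r x) \<partial>M) = (\<integral>\<^sup>+ x. f x * ennreal (exp (h x) / r x) \<partial>N)"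
        unfolding Mdens[symmetric] by (subst nn_integral_density) auto
      also have "\<dots> \<le> (\<integral>\<^sup>+ x. ennreal (exp (h x)) \<partial>N)"
      proof (rule nn_integral_mono)
        fix x
        show "f x * ennreal (exp (h x) / r x) \<le> ennreal (exp (h x))"
        proof (cases "f x = \<infinity>")
          case True then show ?thesis by (simp add: r_def)
        next
          case False
          then obtain t where t: "f x = ennreal t" "t \<ge> 0" by (cases "f x") auto
          then have "r x = t" by (simp add: r_def)
          then show ?thesis using t
            by (cases "t = 0") (auto simp: ennreal_mult[symmetric] intro!: ennreal_leI)
        qed
      qed
      also have "\<dots> = ennreal (\<integral>x. exp (h x) \<partial>N)"
        by (rule nn_integral_eq_integral) (auto intro!: N.integrable_const_bound[where B="exp B'"] AE_I2 dest!: hB simp: abs_le_iff)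
      also have "(\<integral>x. exp (h x) \<partial>N) = 1"
        unfolding h_def using Zpos by (simp add: exp_diff Zn_def[symmetric])
      finally show ?thesis by simp
    qed
    have B'0: "B' \<ge> 0" using hB[of "SOME x. x \<in> space N"] N.not_empty
      by (metis abs_ge_zero dual_order.trans some_in_eq)
    have eqh: "(\<integral>\<^sup>+ x. ennreal (h x + B' + 1) \<partial>M) = ennreal ((\<integral>x. h x \<partial>M) + B' + 1)"
    proof -
      have "(\<integral>\<^sup>+ x. ennreal (h x + B' + 1) \<partial>M) = ennreal (\<integral>x. h x + B' + 1 \<partial>M)"
        by (rule nn_integral_eq_integral) (use int_hM hB spM in \<open>auto intro!: AE_I2 simp: abs_le_iff, fastforce\<close>)
      also have "(\<integral>x. h x + B' + 1 \<partial>M) = (\<integral>x. h x \<partial>M) + B' + 1"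
        using int_hM by (simp add: probMN spM)
      finally show ?thesis .
    qed
    have main: "ennreal ((\<integral>x. h x \<partial>M) + B' + 1) + neg \<le> pos + 1 + ennreal B'"
      using order_trans[OF chain add_right_mono[OF add_left_mono[OF I1]]] unfolding eqh .
    obtain p where p: "pos = ennreal p" "p \<ge> 0" using posfin by (cases pos) auto
    have negfin: "neg \<noteq> \<infinity>" using main p by (auto simp: top_unique ennreal_add_eq_top)
    obtain q where q: "neg = ennreal q" "q \<ge> 0" using negfin by (cases neg) auto
    have hge: "(\<integral>x. h x \<partial>M) + B' + 1 \<ge> 0"
    proof -
      have "(\<integral>x. - B' \<partial>M) \<le> (\<integral>x. h x \<partial>M)"
        by (rule integral_mono[OF _ int_hM]) (use hB spM in \<open>auto simp: abs_le_iff, fastforce\<close>)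
      then show ?thesis by (simp add: probMN spM)
    qed
    have "ennreal ((\<integral>x. h x \<partial>M) + B' + 1 + q) \<le> ennreal (p + 1 + B')"
    proof -
      have e1: "ennreal ((\<integral>x. h x \<partial>M) + B' + 1 + q) = ennreal ((\<integral>x. h x \<partial>M) + B' + 1) + neg"
        using q hge by (subst ennreal_plus) auto
      have e2: "ennreal (p + 1 + B') = pos + 1 + ennreal B'"
        using p B'0 by (subst ennreal_plus, simp, simp, subst ennreal_plus) auto
      show ?thesis unfolding e1 e2 by (rule main)
    qed
    then have "(\<integral>x. h x \<partial>M) + B' + 1 + q \<le> p + 1 + B'"
      using p B'0 by (subst (asm) ennreal_le_iff) auto
    then show ?thesis unfolding KL p q using p q int_h unfolding Zn_def by simp
  qed
qed


lemma aux_neg: fixes t :: real assumes "t \<ge> 0" shows "ennreal t * ennreal (- ln t) \<le> 1"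
proof (cases "t > 0 \<and> t < 1")
  case True
  have "ln (1 / t) \<le> 1 / t - 1" using True by (intro ln_le_minus_one) simp
  then have "- ln t \<le> 1 / t - 1" using True by (simp add: ln_div)
  then have "t * (- ln t) \<le> t * (1 / t - 1)" using True by (intro mult_left_mono) auto
  also have "\<dots> \<le> 1" using True by (simp add: field_simps)
  finally have le1: "t * (- ln t) \<le> 1" .
  have "ennreal t * ennreal (- ln t) = ennreal (t * (- ln t))"
    using True by (subst ennreal_mult) auto
  then show ?thesis using le1 by simp
next
  case False
  then have "t = 0 \<or> t \<ge> 1" using assms by auto
  then show ?thesis by (auto simp: ennreal_neg)
qed

lemma aux_exp_clamp:
  fixes t a :: real assumes "t \<ge> 0"
  shows "exp (if 0 < t then max (- a) (min a (ln t)) else - a) \<le> t + exp (- a)"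
proof (cases "0 < t")
  case True
  have "exp (max (- a) (min a (ln t))) = max (exp (- a)) (exp (min a (ln t)))"
    by (simp add: max_def)
  also have "exp (min a (ln t)) \<le> exp (ln t)" by simp
  then have "exp (min a (ln t)) \<le> t" using True by simp
  then have "max (exp (- a)) (exp (min a (ln t))) \<le> t + exp (- a)"
    by (intro max.boundedI) (use True exp_gt_zero[of "-a"] in linarith)+
  finally show ?thesis using True by simp
qed (use assms in simp)

lemma SUP_ennreal_min_nat:
  fixes t :: real assumes "t \<ge> 0"
  shows "(SUP n::nat. ennreal (min (real n) t)) = ennreal t"
proof (rule antisym)
  show "(SUP n::nat. ennreal (min (real n) t)) \<le> ennreal t"
    by (rule SUP_least) (auto intro!: ennreal_leI)
  obtain n :: nat where "t \<le> real n" using real_arch_simple by blast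
  then show "ennreal t \<le> (SUP n::nat. ennreal (min (real n) t))"
    by (intro SUP_upper2[where i=n]) auto
qed

lemma exp_neg_nat_small:
  fixes d :: real assumes "d > 0" shows "\<exists>n::nat. exp (- real n) < d"
proof -
  obtain n :: nat where n: "1 / d < real n" using reals_Archimedean2 by blast
  have "exp (- real n) = 1 / exp (real n)" by (simp add: exp_minus field_simps)
  also have "\<dots> \<le> 1 / (1 + real n)"
    by (intro divide_left_mono exp_ge_add_one_self) auto
  also have "\<dots> < d" using n assms by (simp add: field_simps)
  finally show ?thesis by blast
qed

lemma DV:
  assumes M: "prob_space M" and N: "prob_space N" and sets: "sets M = sets N"
    and c: "ereal c < KL_div M N"
  shows "\<exists>(g::'a \<Rightarrow> real) B. g \<in> borel_measurable N \<and> (\<forall>x\<in>space N. \<bar>g x\<bar> \<le> B) \<and>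
            c < (\<integral>x. g x \<partial>M) - ln (\<integral>x. exp (g x) \<partial>N)"
proof -
  interpret M: prob_space M by fact
  interpret N: prob_space N by fact
  have spM: "space M = space N" using sets by (rule sets_eq_imp_space_eq)
  have probMN: "measure M (space N) = 1" using M.prob_space spM by simp
  show ?thesis
  proof (cases "absolutely_continuous N M")
    case False
    then obtain A where A: "A \<in> null_sets N" "A \<notin> null_sets M"
      unfolding absolutely_continuous_def by auto
    have AN: "A \<in> sets N" using A by auto
    have AM: "A \<in> sets M" using AN sets by simp
    have mA: "measure M A > 0"
      using A AM by (simp add: null_sets_def M.emeasure_eq_measure zero_less_measure_iff)
    define n where "n = (\<bar>c\<bar> + 1) / measure M A"
    define g where "g x = n * indicator A x" for x
    have gm: "g \<in> borel_measurable N" unfolding g_def using AN by simp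
    have gB: "\<forall>x\<in>space N. \<bar>g x\<bar> \<le> \<bar>n\<bar>" unfolding g_def by (auto simp: indicator_def)
    have i1: "(\<integral>x. g x \<partial>M) = n * measure M A" unfolding g_def using AM by simp
    have "AE x in N. x \<notin> A" using A(1) by (rule AE_not_in)
    then have ae1: "AE x in N. exp (g x) = 1" by eventually_elim (simp add: g_def)
    have "(\<integral>x. exp (g x) \<partial>N) = (\<integral>x. 1 \<partial>N)" using gm ae1 by (intro integral_cong_AE) auto
    then have i2: "(\<integral>x. exp (g x) \<partial>N) = 1" by (simp add: N.prob_space)
    have "n * measure M A = \<bar>c\<bar> + 1" unfolding n_def using mA by simp
    then have "c < (\<integral>x. g x \<partial>M) - ln (\<integral>x. exp (g x) \<partial>N)" unfolding i1 i2 by simp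
    then show ?thesis using gm gB by blast
  next
    case ac: True
    define f where "f = RN_deriv N M"
    define r where "r x = enn2real (f x)" for x
    have f_meas[measurable]: "f \<in> borel_measurable N" unfolding f_def by simp
    have r_meas[measurable]: "r \<in> borel_measurable N" unfolding r_def by simp
    have Mdens: "density N f = M" unfolding f_def
      using N.density_RN_deriv[OF ac] sets by simp
    have rM[measurable]: "r \<in> borel_measurable M" using r_meas sets by (simp cong: measurable_cong_sets)
    define pos where "pos = (\<integral>\<^sup>+ x. ennreal (ln (r x)) \<partial>M)"
    define neg where "neg = (\<integral>\<^sup>+ x. ennreal (- ln (r x)) \<partial>M)"
    have KL: "KL_div M N = enn2ereal pos - enn2ereal neg"
      using ac sets by (simp add: KL_div_def pos_def neg_def r_def f_def)
    have ffin: "AE x in N. f x \<noteq> \<infinity>"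
      unfolding f_def by (rule N.RN_deriv_finite[OF M.sigma_finite_measure ac sets])
    have Aer: "AE x in M. 0 < r x"
    proof -
      have "AE x in N. f x \<noteq> 0 \<longrightarrow> 0 < r x"
        using ffin by eventually_elim (auto simp: r_def enn2real_positive_iff less_top zero_less_iff_neq_zero)
      then have "AE x in density N f. 0 < r x"
        by (subst AE_density) auto
      then show ?thesis unfolding Mdens .
    qed
    have negle: "neg \<le> 1"
    proof -
      have "neg = (\<integral>\<^sup>+ x. f x * ennreal (- ln (r x)) \<partial>N)"
        unfolding neg_def Mdens[symmetric] by (subst nn_integral_density) auto
      also have "\<dots> \<le> (\<integral>\<^sup>+ x. 1 \<partial>N)"
      proof (rule nn_integral_mono_AE)
        show "AE x in N. f x * ennreal (- ln (r x)) \<le> 1"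
          using ffin
        proof eventually_elim
          case (elim x)
          then obtain t where t: "f x = ennreal t" "t \<ge> 0" by (cases "f x") auto
          then show ?case using aux_neg[OF t(2)] by (simp add: r_def)
        qed
      qed
      finally show ?thesis by (simp add: N.emeasure_space_1)
    qed
    obtain q where q: "neg = ennreal q" "q \<ge> 0" using negle by (cases neg) (auto simp: top_unique)
    define w where "w x = max 0 (- ln (r x))" for x
    have w_meas[measurable]: "w \<in> borel_measurable M" unfolding w_def by simp
    have w_bi: "has_bochner_integral M w q"
      by (rule has_bochner_integral_nn_integral) (use q in \<open>auto simp: w_def neg_def ennreal_max_0\<close>)
    define u where "u n x = min (real n) (max 0 (ln (r x)))" for n :: nat and x
    define a where "a n = (\<integral>x. u n x \<partial>M)" for n
    have u_meas[measurable]: "u n \<in> borel_measurable M" for n unfolding u_def by simp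
    have u_int: "integrable M (u n)" for n
      by (rule M.integrable_const_bound[where B="real n"]) (auto simp: u_def)
    have a_nonneg: "a n \<ge> 0" for n unfolding a_def by (rule integral_nonneg_AE) (auto simp: u_def)
    have a_mono: "a m \<le> a n" if "m \<le> n" for m n
      unfolding a_def by (rule integral_mono[OF u_int u_int]) (use that in \<open>auto simp: u_def\<close>)
    have a_enn: "ennreal (a n) = (\<integral>\<^sup>+ x. ennreal (u n x) \<partial>M)" for n
      unfolding a_def by (rule nn_integral_eq_integral[symmetric, OF u_int]) (auto simp: u_def)
    have pos_SUP: "pos = (SUP n. ennreal (a n))"
    proof -
      have "pos = (\<integral>\<^sup>+ x. (SUP n. ennreal (u n x)) \<partial>M)"
        unfolding pos_def u_def by (subst SUP_ennreal_min_nat) (auto simp: ennreal_max_0)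
      also have "\<dots> = (SUP n. (\<integral>\<^sup>+ x. ennreal (u n x) \<partial>M))"
        by (rule nn_integral_monotone_convergence_SUP)
           (auto simp: incseq_def le_fun_def u_def intro!: ennreal_leI)
      finally show ?thesis by (simp add: a_enn)
    qed
    define g where "g n x = (if 0 < r x then max (- real n) (min (real n) (ln (r x))) else - real n)" for n :: nat and x
    have g_meas[measurable]: "g n \<in> borel_measurable N" for n unfolding g_def by measurable
    have gM[measurable]: "g n \<in> borel_measurable M" for n using g_meas sets by (simp cong: measurable_cong_sets)
    have gB: "\<forall>x\<in>space N. \<bar>g n x\<bar> \<le> real n" for n unfolding g_def by auto
    have glow: "- real n \<le> g n x" for n x unfolding g_def by auto
    have g_intM: "integrable M (g n)" for n
      by (rule M.integrable_const_bound[where B="real n"]) (use gB spM in auto)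
    have eg_int: "integrable N (\<lambda>x. exp (g n x))" for n
      by (rule N.integrable_const_bound[where B="exp (real n)"]) (use gB in \<open>auto simp: abs_le_iff\<close>)
    have E1: "ln (\<integral>x. exp (g n x) \<partial>N) \<le> exp (- real n)" for n
    proof -
      have "ennreal (\<integral>x. exp (g n x) \<partial>N) = (\<integral>\<^sup>+ x. ennreal (exp (g n x)) \<partial>N)"
        by (rule nn_integral_eq_integral[symmetric, OF eg_int]) auto
      also have "\<dots> \<le> (\<integral>\<^sup>+ x. f x + ennreal (exp (- real n)) \<partial>N)"
      proof (rule nn_integral_mono)
        fix x
        show "ennreal (exp (g n x)) \<le> f x + ennreal (exp (- real n))"
        proof (cases "f x = \<infinity>")
          case False
          then obtain t where t: "f x = ennreal t" "t \<ge> 0" by (cases "f x") auto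
          then have rt: "r x = t" by (simp add: r_def)
          have "exp (g n x) \<le> t + exp (- real n)"
            unfolding g_def rt by (rule aux_exp_clamp[OF t(2)])
          then show ?thesis using t by (simp add: ennreal_plus[symmetric] del: ennreal_plus)
        qed simp
      qed
      also have "\<dots> = (\<integral>\<^sup>+ x. f x \<partial>N) + ennreal (exp (- real n))"
        by (subst nn_integral_add) (auto simp: N.emeasure_space_1)
      also have "(\<integral>\<^sup>+ x. f x \<partial>N) = 1"
      proof -
        have "(\<integral>\<^sup>+ x. f x \<partial>N) = (\<integral>\<^sup>+ x. 1 \<partial>density N f)"
          by (subst nn_integral_density) auto
        then show ?thesis unfolding Mdens by (simp add: M.emeasure_space_1)
      qed
      finally have X: "ennreal (\<integral>x. exp (g n x) \<partial>N) \<le> 1 + ennreal (exp (- real n))" .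
      have e: "1 + ennreal (exp (- real n)) = ennreal (1 + exp (- real n))" by (subst ennreal_plus) auto
      from X have le: "(\<integral>x. exp (g n x) \<partial>N) \<le> 1 + exp (- real n)"
        unfolding e by (subst (asm) ennreal_le_iff) auto
      have "(\<integral>x. exp (- real n) \<partial>N) \<le> (\<integral>x. exp (g n x) \<partial>N)"
        using glow by (intro integral_mono[OF _ eg_int]) auto
      then have "exp (- real n) \<le> (\<integral>x. exp (g n x) \<partial>N)" by (simp add: N.prob_space)
      then have gt: "(\<integral>x. exp (g n x) \<partial>N) > 0" by (smt (verit) exp_gt_zero)
      have "ln (\<integral>x. exp (g n x) \<partial>N) \<le> ln (1 + exp (- real n))"
        using le gt by simp
      also have "\<dots> \<le> exp (- real n)" by (rule ln_add_one_self_le_self) simp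
      finally show ?thesis .
    qed
    have E2: "a n - q \<le> (\<integral>x. g n x \<partial>M)" for n
    proof -
      have "(\<integral>x. u n x - w x \<partial>M) \<le> (\<integral>x. g n x \<partial>M)"
      proof (rule integral_mono_AE)
        show "integrable M (\<lambda>x. u n x - w x)"
          using u_int w_bi by (auto intro!: Bochner_Integration.integrable_diff simp: has_bochner_integral_iff)
        show "AE x in M. u n x - w x \<le> g n x"
          using Aer by eventually_elim (auto simp: u_def w_def g_def)
      qed (rule g_intM)
      moreover have "(\<integral>x. u n x - w x \<partial>M) = a n - q"
        using u_int w_bi unfolding a_def
        by (subst Bochner_Integration.integral_diff) (auto simp: has_bochner_integral_iff)
      ultimately show ?thesis by simp
    qed
    have KL': "KL_div M N = enn2ereal pos - ereal q" unfolding KL q(1) using q(2) by simp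
    obtain T where T: "c + q < T" "T < 0 \<or> ennreal T < pos"
    proof (cases "pos = \<infinity>")
      case True
      show ?thesis by (rule that[of "c + q + 1"]) (auto simp: True)
    next
      case False
      then obtain p where p: "pos = ennreal p" "p \<ge> 0" by (cases pos) auto
      have "(c::real) < (p::real) - q" using c unfolding KL' p using p by simp
      then have h: "(c + q + p) / 2 < p" by (simp add: field_simps)
      then have "(c + q + p) / 2 < 0 \<or> ennreal ((c + q + p) / 2) < pos"
        using p by (cases "p > 0") (auto intro: ennreal_lessI)
      then show ?thesis using h by (intro that[of "(c + q + p) / 2"]) auto
    qed
    obtain n1 where n1: "T < a n1"
    proof (cases "T < 0")
      case True then show ?thesis using a_nonneg[of 0] that[of 0] by linarith
    next
      case False
      then have "ennreal T < (SUP n. ennreal (a n))" using T pos_SUP by auto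
      then obtain n where "ennreal T < ennreal (a n)" by (auto simp: less_SUP_iff)
      then have "T < a n" using False by (subst (asm) ennreal_less_iff) auto
      then show ?thesis by (rule that)
    qed
    obtain n2 where n2: "exp (- real n2) < T - (c + q)" using exp_neg_nat_small[of "T - (c + q)"] T by auto
    define n where "n = max n1 n2"
    have "a n1 \<le> a n" unfolding n_def by (rule a_mono) simp
    moreover have "exp (- real n) \<le> exp (- real n2)" unfolding n_def by simp
    ultimately have "c < (\<integral>x. g n x \<partial>M) - ln (\<integral>x. exp (g n x) \<partial>N)"
      using E1[of n] E2[of n] n1 n2 by linarith
    then show ?thesis using g_meas gB by blast
  qed
qed


theorem propositionA6:
  fixes P :: "('x \<times> 'y \<times> 'z) measure"
    and MX :: "'x measure" and MY :: "'y measure" and MZ :: "'z measure"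
    and K :: "'z \<Rightarrow> ('x \<times> 'y) measure"
  assumes "prob_space P"
    and "sets P = sets (MX \<Otimes>\<^sub>M (MY \<Otimes>\<^sub>M MZ))"
    and "is_cond_dist P MX MY MZ K"
  shows "weak_MI P MX MY MZ K \<le> cond_MI P MX MY MZ K"
proof -
  interpret P: prob_space P by fact
  note setsP = assms(2)
  have spP: "space P = space MX \<times> space MY \<times> space MZ"
    using sets_eq_imp_space_eq[OF setsP] by (simp add: space_pair_measure)
  have Kmeas[measurable]: "K \<in> MZ \<rightarrow>\<^sub>M subprob_algebra (MX \<Otimes>\<^sub>M MY)"
    and Kprob: "\<And>z. z \<in> space MZ \<Longrightarrow> prob_space (K z)"
    and Keq: "\<And>A C. A \<in> sets (MX \<Otimes>\<^sub>M MY) \<Longrightarrow> C \<in> sets MZ \<Longrightarrow>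
        emeasure P {(x, y, z) \<in> space P. (x, y) \<in> A \<and> z \<in> C}
          = (\<integral>\<^sup>+ z. indicator C z * emeasure (K z) A \<partial>law_Z P MZ)"
    using assms(3) unfolding is_cond_dist_def by auto
  define \<mu> where "\<mu> = law_Z P MZ"
  define Q where "Q z = condX MX K z \<Otimes>\<^sub>M condY MY K z" for z
  define LXY where "LXY = law_XY P MX MY"
  have mz[measurable]: "(\<lambda>(x, y, z). z) \<in> P \<rightarrow>\<^sub>M MZ"
    unfolding measurable_cong_sets[OF setsP refl] by measurable
  have mxy[measurable]: "(\<lambda>(x, y, z). (x, y)) \<in> P \<rightarrow>\<^sub>M (MX \<Otimes>\<^sub>M MY)"
    unfolding measurable_cong_sets[OF setsP refl] by measurable
  have mu_prob: "prob_space \<mu>" unfolding \<mu>_def law_Z_def by (rule P.prob_space_distr[OF mz])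
  have sp_mu: "space \<mu> = space MZ" and sets_mu: "sets \<mu> = sets MZ" unfolding \<mu>_def law_Z_def by simp_all
  have mu_ne: "space \<mu> \<noteq> {}" using prob_space.not_empty[OF mu_prob] .
  have Kmeas_mu[measurable]: "K \<in> \<mu> \<rightarrow>\<^sub>M subprob_algebra (MX \<Otimes>\<^sub>M MY)"
    unfolding measurable_cong_sets[OF sets_mu refl] by (rule Kmeas)
  have Qmeas[measurable]: "Q \<in> MZ \<rightarrow>\<^sub>M subprob_algebra (MX \<Otimes>\<^sub>M MY)"
    unfolding Q_def condX_def condY_def
    by (rule measurable_pair_measure[OF measurable_compose[OF Kmeas measurable_distr[OF measurable_fst]]
          measurable_compose[OF Kmeas measurable_distr[OF measurable_snd]]])
  have Qmeas_mu[measurable]: "Q \<in> \<mu> \<rightarrow>\<^sub>M subprob_algebra (MX \<Otimes>\<^sub>M MY)"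
    unfolding measurable_cong_sets[OF sets_mu refl] by (rule Qmeas)
  have setsK: "sets (K z) = sets (MX \<Otimes>\<^sub>M MY)" if "z \<in> space MZ" for z
    using subprob_measurableD(2)[OF Kmeas that] .
  have setsQ: "sets (Q z) = sets (MX \<Otimes>\<^sub>M MY)" if "z \<in> space MZ" for z
    using subprob_measurableD(2)[OF Qmeas that] .
  have Qprob: "prob_space (Q z)" if z: "z \<in> space MZ" for z
  proof -
    interpret Kz: prob_space "K z" using Kprob[OF z] .
    have "fst \<in> K z \<rightarrow>\<^sub>M MX" "snd \<in> K z \<rightarrow>\<^sub>M MY"
      using measurable_cong_sets[OF setsK[OF z] refl] by auto
    then show ?thesis unfolding Q_def condX_def condY_def
      by (intro prob_space_pair Kz.prob_space_distr)
  qed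
  have LXY_eq: "LXY = \<mu> \<bind> K"
  proof (rule measure_eqI)
    show sL: "sets LXY = sets (\<mu> \<bind> K)"
      unfolding LXY_def law_XY_def using setsK mu_ne sp_mu
      by (subst sets_bind[where N="MX \<Otimes>\<^sub>M MY"]) auto
    fix A assume "A \<in> sets LXY"
    then have A: "A \<in> sets (MX \<Otimes>\<^sub>M MY)" unfolding LXY_def law_XY_def by simp
    have "emeasure LXY A = emeasure P ((\<lambda>(x, y, z). (x, y)) -` A \<inter> space P)"
      unfolding LXY_def law_XY_def using A by (subst emeasure_distr) auto
    also have "(\<lambda>(x, y, z). (x, y)) -` A \<inter> space P = {(x, y, z) \<in> space P. (x, y) \<in> A \<and> z \<in> space MZ}"
      using spP by auto
    also have "emeasure P \<dots> = (\<integral>\<^sup>+ z. indicator (space MZ) z * emeasure (K z) A \<partial>\<mu>)"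
      unfolding \<mu>_def using Keq[OF A] by simp
    also have "\<dots> = (\<integral>\<^sup>+ z. emeasure (K z) A \<partial>\<mu>)"
      by (rule nn_integral_cong) (simp add: sp_mu)
    also have "\<dots> = emeasure (\<mu> \<bind> K) A"
      by (rule emeasure_bind[symmetric, OF mu_ne Kmeas_mu A])
    finally show "emeasure LXY A = emeasure (\<mu> \<bind> K) A" .
  qed
  interpret mu: prob_space \<mu> by (rule mu_prob)
  define I where "I = (\<integral>\<^sup>+ z. e2ennreal (KL_div (K z) (Q z)) \<partial>\<mu>)"
  have cond: "cond_MI P MX MY MZ K = enn2ereal I"
    unfolding cond_MI_def I_def \<mu>_def Q_def ..
  have weak: "weak_MI P MX MY MZ K = KL_div LXY (\<mu> \<bind> Q)"
    unfolding weak_MI_def LXY_def \<mu>_def Q_def ..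
  have sets_bQ: "sets (\<mu> \<bind> Q) = sets (MX \<Otimes>\<^sub>M MY)"
    using setsQ mu_ne sp_mu by (subst sets_bind[where N="MX \<Otimes>\<^sub>M MY"]) auto
  have sets_L: "sets LXY = sets (MX \<Otimes>\<^sub>M MY)" unfolding LXY_def law_XY_def by simp
  have L_prob: "prob_space LXY" unfolding LXY_def law_XY_def by (rule P.prob_space_distr[OF mxy])
  have bQ_prob: "prob_space (\<mu> \<bind> Q)"
    by (rule mu.prob_space_bind[OF _ Qmeas_mu]) (auto intro!: AE_I2 Qprob simp: sp_mu)
  show ?thesis
  proof (rule ccontr)
    assume "\<not> ?thesis"
    then have lt: "enn2ereal I < KL_div LXY (\<mu> \<bind> Q)" unfolding cond weak by simp
    then have Ifin: "I \<noteq> \<top>" by auto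
    define c where "c = enn2real I"
    have Ic: "enn2ereal I = ereal c" unfolding c_def using Ifin
      by (cases I) auto
    obtain g B where gm: "g \<in> borel_measurable (\<mu> \<bind> Q)" and gB: "\<forall>x\<in>space (\<mu> \<bind> Q). \<bar>g x\<bar> \<le> B"
      and gc: "c < (\<integral>x. g x \<partial>LXY) - ln (\<integral>x. exp (g x) \<partial>(\<mu> \<bind> Q))"
      using DV[OF L_prob bQ_prob sets_L[unfolded sets_bQ[symmetric]]] lt unfolding Ic by blast
    have g[measurable]: "g \<in> borel_measurable (MX \<Otimes>\<^sub>M MY)"
      using gm unfolding measurable_cong_sets[OF sets_bQ refl] .
    have gB': "\<And>x. x \<in> space (MX \<Otimes>\<^sub>M MY) \<Longrightarrow> \<bar>g x\<bar> \<le> B"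
      using gB sets_eq_imp_space_eq[OF sets_bQ] by auto
    have B0: "B \<ge> 0"
    proof -
      obtain x where "x \<in> space (MX \<Otimes>\<^sub>M MY)"
        using prob_space.not_empty[OF L_prob] sets_eq_imp_space_eq[OF sets_L] by auto
      then show ?thesis using gB'[of x] by linarith
    qed
    define G where "G z = (\<integral>x. g x \<partial>K z)" for z
    define E where "E z = (\<integral>x. exp (g x) \<partial>Q z)" for z
    have G_meas[measurable]: "G \<in> borel_measurable \<mu>"
      unfolding G_def by (rule measurable_compose[OF Kmeas_mu integral_measurable_subprob_algebra[OF g]])
    have E_meas[measurable]: "E \<in> borel_measurable \<mu>"
      unfolding E_def by (rule measurable_compose[OF Qmeas_mu integral_measurable_subprob_algebra]) simp
    have GB: "\<bar>G z\<bar> \<le> B" if z: "z \<in> space MZ" for z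
    proof -
      interpret Kz: prob_space "K z" using Kprob[OF z] .
      have sp: "space (K z) = space (MX \<Otimes>\<^sub>M MY)" using sets_eq_imp_space_eq[OF setsK[OF z]] .
      have "\<bar>G z\<bar> \<le> (\<integral>x. \<bar>g x\<bar> \<partial>K z)" unfolding G_def by (rule integral_abs_bound)
      also have "\<dots> \<le> (\<integral>x. B \<partial>K z)"
        by (rule integral_mono) (auto intro!: Kz.integrable_const_bound[where B=B] AE_I2 simp: sp gB'
             measurable_cong_sets[OF setsK[OF z] refl])
      finally show ?thesis by (simp add: Kz.prob_space)
    qed
    have EB: "exp (- B) \<le> E z \<and> E z \<le> exp B" if z: "z \<in> space MZ" for z
    proof -
      interpret Qz: prob_space "Q z" using Qprob[OF z] .
      have sp: "space (Q z) = space (MX \<Otimes>\<^sub>M MY)" using sets_eq_imp_space_eq[OF setsQ[OF z]] .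
      have gQ[measurable]: "g \<in> borel_measurable (Q z)" unfolding measurable_cong_sets[OF setsQ[OF z] refl] by (rule g)
      have int: "integrable (Q z) (\<lambda>x. exp (g x))"
        by (rule Qz.integrable_const_bound[where B="exp B"]) (auto intro!: AE_I2 simp: sp dest!: gB' simp: abs_le_iff)
      have "(\<integral>x. exp (- B) \<partial>Q z) \<le> E z" unfolding E_def
        by (rule integral_mono[OF _ int]) (auto simp: sp dest!: gB' simp: abs_le_iff)
      moreover have "E z \<le> (\<integral>x. exp B \<partial>Q z)" unfolding E_def
        by (rule integral_mono[OF int]) (auto simp: sp dest!: gB' simp: abs_le_iff)
      ultimately show ?thesis by (simp add: Qz.prob_space)
    qed
    have Epos: "E z > 0" if "z \<in> space MZ" for z using EB[OF that] by (smt (verit) exp_gt_zero)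
    have intL: "(\<integral>x. g x \<partial>LXY) = (\<integral>z. G z \<partial>\<mu>)"
      unfolding LXY_eq G_def
      by (rule integral_bind[OF g _ Kmeas_mu, where B'=1 and B=B]) (auto intro!: AE_I2 simp: gB' mu.finite_measure_axioms
             sp_mu prob_space.emeasure_space_1[OF Kprob])
    have intQ: "(\<integral>x. exp (g x) \<partial>(\<mu> \<bind> Q)) = (\<integral>z. E z \<partial>\<mu>)"
      unfolding E_def
      by (rule integral_bind[OF _ _ Qmeas_mu, where B'=1 and B="exp B"])
         (auto intro!: AE_I2 simp: mu.finite_measure_axioms abs_le_iff
             sp_mu prob_space.emeasure_space_1[OF Qprob] dest!: gB')
    have Eabs: "\<bar>E z\<bar> \<le> exp B" if "z \<in> space MZ" for z using EB[OF that] Epos[OF that] by auto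
    have intE: "integrable \<mu> E"
      by (rule mu.integrable_const_bound[where B="exp B"]) (auto intro!: AE_I2 simp: sp_mu Eabs)
    define m where "m = (\<integral>z. E z \<partial>\<mu>)"
    have "(\<integral>z. exp (- B) \<partial>\<mu>) \<le> m" unfolding m_def
      by (rule integral_mono[OF _ intE]) (auto simp: sp_mu dest!: EB)
    then have "exp (- B) \<le> m" by (simp add: mu.prob_space)
    then have mpos: "m > 0" by (smt (verit) exp_gt_zero)
    have lnEB: "\<bar>ln (E z)\<bar> \<le> B" if "z \<in> space MZ" for z
    proof -
      have "ln (exp (- B)) \<le> ln (E z)" "ln (E z) \<le> ln (exp B)"
        using EB[OF that] Epos[OF that] by (simp_all del: ln_exp)
      then show ?thesis by simp
    qed
    have intlnE: "integrable \<mu> (\<lambda>z. ln (E z))"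
      by (rule mu.integrable_const_bound[where B=B]) (auto intro!: AE_I2 simp: sp_mu lnEB)
    have intG: "integrable \<mu> G"
      by (rule mu.integrable_const_bound[where B=B]) (auto intro!: AE_I2 simp: sp_mu GB)
    have jensen: "(\<integral>z. ln (E z) \<partial>\<mu>) \<le> ln m"
    proof -
      have "(\<integral>z. ln (E z) \<partial>\<mu>) \<le> (\<integral>z. (ln m - 1) + E z * (1 / m) \<partial>\<mu>)"
      proof (rule integral_mono[OF intlnE])
        show "integrable \<mu> (\<lambda>z. (ln m - 1) + E z * (1 / m))" using intE by auto
        fix z assume z: "z \<in> space \<mu>"
        have "ln (E z / m) \<le> E z / m - 1" using Epos[of z] z mpos sp_mu by (intro ln_le_minus_one) auto
        moreover have "ln (E z / m) = ln (E z) - ln m" using Epos[of z] z mpos sp_mu by (simp add: ln_div)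
        ultimately show "ln (E z) \<le> (ln m - 1) + E z * (1 / m)" by simp
      qed
      also have "\<dots> = (ln m - 1) + m * (1 / m)"
        using intE unfolding m_def by (simp add: mu.prob_space)
      also have "\<dots> = ln m" using mpos by simp
      finally show ?thesis .
    qed
    define phi where "phi z = G z - ln (E z)" for z
    have intphi: "integrable \<mu> phi" unfolding phi_def using intG intlnE by auto
    have step1: "(\<integral>x. g x \<partial>LXY) - ln (\<integral>x. exp (g x) \<partial>(\<mu> \<bind> Q)) \<le> (\<integral>z. phi z \<partial>\<mu>)"
      unfolding intL intQ m_def[symmetric] phi_def using intG intlnE jensen by simp
    have phiKL: "ereal (phi z) \<le> KL_div (K z) (Q z)" if z: "z \<in> space MZ" for z
    proof -
      have gQ: "g \<in> borel_measurable (Q z)" unfolding measurable_cong_sets[OF setsQ[OF z] refl] by (rule g)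
      show ?thesis unfolding phi_def G_def E_def
        by (rule gibbs[OF Kprob[OF z] Qprob[OF z] _ gQ, where B=B])
           (use setsK[OF z] setsQ[OF z] sets_eq_imp_space_eq[OF setsQ[OF z]] gB' in auto)
    qed
    have phimax: "integrable \<mu> (\<lambda>z. max 0 (phi z))" using intphi by auto
    have "ennreal (\<integral>z. max 0 (phi z) \<partial>\<mu>) = (\<integral>\<^sup>+ z. ennreal (max 0 (phi z)) \<partial>\<mu>)"
      by (rule nn_integral_eq_integral[symmetric, OF phimax]) auto
    also have "\<dots> \<le> I" unfolding I_def
    proof (rule nn_integral_mono)
      fix z assume z: "z \<in> space \<mu>"
      have "ennreal (max 0 (phi z)) = e2ennreal (ereal (phi z))" by (simp add: ennreal_max_0)
      also have "\<dots> \<le> e2ennreal (KL_div (K z) (Q z))" using phiKL[of z] z sp_mu by (intro e2ennreal_mono) auto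
      finally show "ennreal (max 0 (phi z)) \<le> e2ennreal (KL_div (K z) (Q z))" .
    qed
    also have "I = ennreal c" unfolding c_def using Ifin by (cases I) auto
    finally have "(\<integral>z. max 0 (phi z) \<partial>\<mu>) \<le> c"
      by (subst (asm) ennreal_le_iff) (auto simp: c_def)
    moreover have "(\<integral>z. phi z \<partial>\<mu>) \<le> (\<integral>z. max 0 (phi z) \<partial>\<mu>)"
      by (rule integral_mono[OF intphi phimax]) auto
    ultimately show False using gc step1 by linarith
  qed
qed

end
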